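(* Let $(X,L)$ be a normal polarised variety and $D\subset X$ a divisor. If $(X,L)$ is K-semistable and $((X,D);L)$ is log K-stable with angle $\beta\in[0,1]$, then $((X,D);L)$ is log K-stable with angle $\gamma$ for every $\gamma$ with $\beta\le\gamma<1$.
   Context: A test configuration $(\mathcal{X},\mathcal{L})$ for a normal polarised variety $(X,L)$ is a normal variety $\mathcal{X}$ with a proper flat morphism $\pi:\mathcal{X}\to\mathbb{C}$, a $\mathbb{C}^*$-action on $\mathcal{X}$ covering the standard action on $\mathbb{C}$, and a $\mathbb{C}^*$-equivariant relatively ample line bundle $\mathcal{L}$ with $(\mathcal{X}_t,\mathcal{L}_t)\cong(X,L^r)$ for $t\ne0$ (some $r>0$). It is trivial if isomorphic to $X\times\mathbb{C}$ with trivial action on $X$. With $n=\dim X$, write $\dim H^0(\mathcal{X}_0,\mathcal{L}_0^k)=a_0k^n+a_1k^{n-1}+O(k^{n-2})$ and the total $\mathbb{C}^*$-weight on $H^0(\mathcal{X}_0,\mathcal{L}_0^k)$ as $b_0k^{n+1}+b_1k^n+O(k^{n-1})$. The Donaldson–Futaki invariant is $\mathrm{DF}=\frac{b_0a_1-b_1a_0}{a_0}$; $(X,L)$ is K-semistable if $\mathrm{DF}\ge0$ for all test configurations. Let $\mathcal{D}\subset\mathcal{X}$ be the closure of the $\mathbb{C}^*$-orbit of $D$; write $\dim H^0(\mathcal{D}_0,\mathcal{L}_0^k|_{\mathcal{D}_0})=\tilde a_0k^{n-1}+O(k^{n-2})$ and its total weight $\tilde b_0k^n+O(k^{n-1})$.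 For $0\le\beta\le1$, $\mathrm{DF}_\beta((\mathcal{X},\mathcal{D});\mathcal{L})=\frac{b_0a_1-b_1a_0}{a_0}+(1-\beta)\frac{a_0\tilde b_0-b_0\tilde a_0}{2a_0}$, and $((X,D);L)$ is log K-stable with angle $\beta$ if $\mathrm{DF}_\beta>0$ for every nontrivial test configuration. *)

theory Defs
  imports Main "HOL.Real"
begin

text \<open>We therefore model a
polarised pair ((X,D);L) abstractly by its collection of test configurations,
each of which carries the numerical invariants entering the (log) Donaldson-Futaki
invariant: the Hilbert/weight coefficients a0,a1,b0,b1 of the central fibre and
the coefficients ta0, tb0 of the central fibre of the closure of D, together with
a triviality predicate.\<close>

record tc_data =
  a0 :: real
  a1 :: real
  b0 :: real
  b1 :: real
  ta0 :: real
  tb0 :: real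

definition DF :: "tc_data \<Rightarrow> real" where
  "DF t = (b0 t * a1 t - b1 t * a0 t) / a0 t"

definition DF_log :: "real \<Rightarrow> tc_data \<Rightarrow> real" where
  "DF_log \<beta> t = (b0 t * a1 t - b1 t * a0 t) / a0 t
      + (1 - \<beta>) * ((a0 t * tb0 t - b0 t * ta0 t) / (2 * a0 t))"

definition K_semistable :: "'c set \<Rightarrow> ('c \<Rightarrow> tc_data) \<Rightarrow> bool" where
  "K_semistable TC ivt \<longleftrightarrow> (\<forall>c\<in>TC. DF (ivt c) \<ge> 0)"

definition log_K_stable ::
  "'c set \<Rightarrow> ('c \<Rightarrow> tc_data) \<Rightarrow> ('c \<Rightarrow> bool) \<Rightarrow> real \<Rightarrow> bool" where
  "log_K_stable TC ivt trivial \<beta> \<longleftrightarrow>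
     0 \<le> \<beta> \<and> \<beta> \<le> 1 \<and> (\<forall>c\<in>TC. \<not> trivial c \<longrightarrow> DF_log \<beta> (ivt c) > 0)"

end

theory Submission
  imports Defs
begin

lemma key:
  fixes D E \<beta> \<gamma> :: real
  assumes "D \<ge> 0" "D + (1-\<beta>)*E > 0" "\<beta> \<le> \<gamma>" "\<gamma> < 1"
  shows "D + (1-\<gamma>)*E > 0"
proof -
  define t where "t = (1-\<gamma>)/(1-\<beta>)"
  have b: "1 - \<beta> > 0" using assms by simp
  have t0: "t > 0" and t1: "t \<le> 1" using assms b by (auto simp: t_def field_simps)
  have eq: "D + (1-\<gamma>)*E = (1-t)*D + t*(D + (1-\<beta>)*E)"
  proof -
    have "t*(1-\<beta>) = 1-\<gamma>" using b by (simp add: t_def)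
    then have "t*(1-\<beta>)*E = (1-\<gamma>)*E" by simp
    then show ?thesis by (simp add: algebra_simps)
  qed
  have "(1-t)*D \<ge> 0" using t1 assms by simp
  moreover have "t*(D + (1-\<beta>)*E) > 0" using t0 assms by simp
  ultimately show ?thesis using eq by linarith
qed

theorem lemma2p4:
  fixes TC :: "'c set" and ivt :: "'c \<Rightarrow> tc_data" and trivial :: "'c \<Rightarrow> bool"
    and \<beta> \<gamma> :: real
  assumes "K_semistable TC ivt"
    and "log_K_stable TC ivt trivial \<beta>"
    and "\<beta> \<le> \<gamma>" and "\<gamma> < 1"
  shows "log_K_stable TC ivt trivial \<gamma>"
  unfolding log_K_stable_def
proof (intro conjI ballI impI)
  show "0 \<le> \<gamma>" "\<gamma> \<le> 1" using assms unfolding log_K_stable_def by auto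
  fix c assume c: "c \<in> TC" "\<not> trivial c"
  have "DF (ivt c) \<ge> 0" using assms(1) c unfolding K_semistable_def by auto
  moreover have "DF_log \<beta> (ivt c) > 0" using assms(2) c unfolding log_K_stable_def by auto
  ultimately show "DF_log \<gamma> (ivt c) > 0"
    using key[OF _ _ assms(3,4)] unfolding DF_log_def DF_def by blast
qed

end
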